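(* Consider the system of ordinary differential equations \[ \dot u=r_{1}u(1-u)-a_{12}uv-a_{13}uw,\qquad \dot v=r_{2}v(1-v)+a_{21}uv,\qquad \dot w=-\mu w+a_{31}uw, \] with all parameters $r_1,r_2,\mu,a_{12},a_{13},a_{21},a_{31}$ positive. Assume \[ r_{1}r_{2}a_{31}-r_{1}r_{2}\mu-a_{12}a_{31}r_{2}-a_{12}a_{21}\mu>0 . \] Then the positive equilibrium \[ E_{*}=(u_{*},v_{*},w_{*})=\left(\frac{\mu}{a_{31}},\;1+\frac{a_{21}\mu}{a_{31}r_{2}},\;\frac{r_{1}r_{2}a_{31}-r_{1}r_{2}\mu-a_{12}a_{31}r_{2}-a_{12}a_{21}\mu}{a_{13}a_{31}r_{2}}\right) \] exists and it is globally asymptotically stable, i.e. it is stable and every solution with $u(0),v(0),w(0)>0$ converges to $E_*$ as $t\to\infty$.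
   Context: $u,v,w$ denote population densities of three species; solutions are considered in the positive orthant. *)

theory Defs
  imports "HOL-Analysis.Analysis"
begin

definition is_solution ::
  "real \<Rightarrow> real \<Rightarrow> real \<Rightarrow> real \<Rightarrow> real \<Rightarrow> real \<Rightarrow> real \<Rightarrow>
   (real \<Rightarrow> real) \<Rightarrow> (real \<Rightarrow> real) \<Rightarrow> (real \<Rightarrow> real) \<Rightarrow> bool" where
  "is_solution r1 r2 mu a12 a13 a21 a31 u v w \<longleftrightarrow>
     (\<forall>t\<ge>0.
        (u has_real_derivative (r1 * u t * (1 - u t) - a12 * u t * v t - a13 * u t * w t))
          (at t within {0..}) \<and>
        (v has_real_derivative (r2 * v t * (1 - v t) + a21 * u t * v t))
          (at t within {0..}) \<and>
        (w has_real_derivative (- mu * w t + a31 * u t * w t))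
          (at t within {0..}))"

definition dist3 :: "real \<Rightarrow> real \<Rightarrow> real \<Rightarrow> real \<Rightarrow> real \<Rightarrow> real \<Rightarrow> real" where
  "dist3 x1 y1 z1 x2 y2 z2 = sqrt ((x1 - x2)^2 + (y1 - y2)^2 + (z1 - z2)^2)"

end

theory Submission
  imports Defs "HOL-Analysis.Analysis"
begin


lemma deriv_at_of_within:
  assumes "(f has_real_derivative D) (at t within {0..})" "t > 0"
  shows "(f has_real_derivative D) (at t)"
proof -
  have "t \<in> interior {0::real..}" using assms(2) by (simp add: interior_real_atLeast)
  then show ?thesis using assms(1) at_within_interior by metis
qed

lemma cont_of_deriv:
  assumes "\<And>t. t \<ge> 0 \<Longrightarrow> (f has_real_derivative f' t) (at t within {0..})"
  shows "continuous_on {0..} f"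
  unfolding continuous_on_eq_continuous_within
  using assms DERIV_continuous by (metis atLeast_iff)

lemma deriv_le_decrease:
  fixes f f' :: "real \<Rightarrow> real"
  assumes "0 \<le> a" "a \<le> b"
    and d: "\<And>t. t \<ge> 0 \<Longrightarrow> (f has_real_derivative f' t) (at t within {0..})"
    and le: "\<And>t. a \<le> t \<Longrightarrow> t \<le> b \<Longrightarrow> f' t \<le> -c"
  shows "f b \<le> f a - c*(b-a)"
proof -
  define h where "h s = f s + c * s" for s
  have "h b \<le> h a"
  proof (rule DERIV_nonpos_imp_decreasing_open[OF assms(2)])
    fix x assume x: "a < x" "x < b"
    have "(f has_real_derivative f' x) (at x)" using d[of x] x assms(1) deriv_at_of_within by auto
    then have "(h has_real_derivative (f' x + c)) (at x)"
      unfolding h_def by (auto intro!: derivative_eq_intros)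
    moreover have "f' x + c \<le> 0" using le[of x] x by auto
    ultimately show "\<exists>y. (h has_real_derivative y) (at x) \<and> y \<le> 0" by blast
  next
    have "continuous_on {a..b} f" using cont_of_deriv[OF d] continuous_on_subset assms(1) by fastforce
    then show "continuous_on {a..b} h" unfolding h_def by (intro continuous_intros)
  qed
  then show ?thesis by (simp add: algebra_simps h_def)
qed

lemma lipschitz_of_deriv:
  fixes f f' :: "real \<Rightarrow> real"
  assumes d: "\<And>t. t \<ge> 0 \<Longrightarrow> (f has_real_derivative f' t) (at t within {0..})"
    and b: "\<And>t. t \<ge> 0 \<Longrightarrow> \<bar>f' t\<bar> \<le> M" and "s \<ge> 0" "t \<ge> 0"
  shows "\<bar>f s - f t\<bar> \<le> M * \<bar>s - t\<bar>"
  using field_differentiable_bound[of "{0..}" f f' M s t] d b assms(3,4) by auto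

lemma positivity:
  fixes f g :: "real \<Rightarrow> real"
  assumes d: "\<And>t. t \<ge> 0 \<Longrightarrow> (f has_real_derivative (f t * g t)) (at t within {0..})"
    and cg: "continuous_on {0..} g" and f0: "f 0 > 0" and t: "t \<ge> 0"
  shows "f t > 0"
proof (rule ccontr)
  assume "\<not> f t > 0"
  define S where "S = {0..t} \<inter> f -` {..0}"
  have cf: "continuous_on {0..} f" by (rule cont_of_deriv[OF d])
  have "closed S" unfolding S_def
    by (rule continuous_closed_preimage) (use cf continuous_on_subset[of "{0..}" f "{0..t}"] in auto)
  moreover have "t \<in> S" using \<open>\<not> f t > 0\<close> t by (auto simp: S_def)
  moreover have "bdd_below S" unfolding S_def by auto
  ultimately have t1S: "Inf S \<in> S" using closed_contains_Inf by blast
  define t1 where "t1 = Inf S"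
  have t1: "0 \<le> t1" "f t1 \<le> 0" using t1S by (auto simp: S_def t1_def)
  have t1pos: "t1 > 0" using t1 f0 by (cases "t1 = 0") auto
  have fpos: "f s > 0" if "0 \<le> s" "s < t1" for s
  proof (rule ccontr)
    assume "\<not> f s > 0"
    then have "s \<in> S" using that t1S by (auto simp: S_def t1_def)
    then have "t1 \<le> s" unfolding t1_def using \<open>bdd_below S\<close> by (simp add: cInf_lower)
    then show False using that by auto
  qed
  have "compact (g ` {0..t1})"
    by (rule compact_continuous_image) (use cg continuous_on_subset[of "{0..}" g "{0..t1}"] in auto)
  then obtain G where G: "\<And>s. s \<in> {0..t1} \<Longrightarrow> \<bar>g s\<bar> \<le> G"
    using compact_imp_bounded bounded_real by (metis image_eqI)
  define q where "q s = f s * exp (G * s)" for s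
  have "q 0 \<le> q t1"
  proof (rule DERIV_nonneg_imp_increasing_open[OF t1(1)])
    fix x assume x: "0 < x" "x < t1"
    have "(f has_real_derivative (f x * g x)) (at x)" using d[of x] x deriv_at_of_within by auto
    then have "(q has_real_derivative (f x * g x * exp (G*x) + f x * (exp (G*x) * G))) (at x)"
      unfolding q_def by (auto intro!: derivative_eq_intros)
    moreover have "f x * g x * exp (G*x) + f x * (exp (G*x) * G) = f x * exp (G*x) * (g x + G)"
      by (simp add: algebra_simps)
    moreover have "f x * exp (G*x) * (g x + G) \<ge> 0"
      using fpos[of x] x G[of x] by (intro mult_nonneg_nonneg) auto
    ultimately show "\<exists>y. (q has_real_derivative y) (at x) \<and> y \<ge> 0" by metis
  next
    show "continuous_on {0..t1} q" unfolding q_def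
      using cf continuous_on_subset[of "{0..}" f "{0..t1}"] by (intro continuous_intros) auto
  qed
  moreover have "q 0 > 0" using f0 by (simp add: q_def)
  moreover have "q t1 \<le> 0" using t1 by (simp add: q_def mult_nonpos_nonneg)
  ultimately show False by linarith
qed



lemma not_tendsto0_E:
  fixes g :: "real \<Rightarrow> real"
  assumes "\<not> (g \<longlongrightarrow> 0) at_top"
  obtains e where "e > 0" "\<And>T. \<exists>t\<ge>T. \<bar>g t\<bar> \<ge> e"
proof -
  from assms obtain e where e: "e > 0" "\<not> eventually (\<lambda>t. dist (g t) 0 < e) at_top"
    unfolding tendsto_iff by blast
  then have "\<And>T. \<exists>t\<ge>T. \<bar>g t\<bar> \<ge> e"
    unfolding eventually_at_top_linorder by (auto simp: not_less)
  with e show ?thesis using that by blast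
qed

lemma decay_lemma:
  fixes F F' g :: "real \<Rightarrow> real"
  assumes d: "\<And>t. t \<ge> 0 \<Longrightarrow> (F has_real_derivative F' t) (at t within {0..})"
    and le: "\<And>t. t \<ge> 0 \<Longrightarrow> F' t \<le> - k * (g t)^2" and k: "k > 0"
    and nn: "\<And>t. t \<ge> 0 \<Longrightarrow> F t \<ge> 0"
    and lip: "\<And>s t. s \<ge> 0 \<Longrightarrow> t \<ge> 0 \<Longrightarrow> \<bar>g s - g t\<bar> \<le> M * \<bar>s - t\<bar>" and M: "M > 0"
  shows "(g \<longlongrightarrow> 0) at_top"
proof (rule ccontr)
  assume "\<not> (g \<longlongrightarrow> 0) at_top"
  then obtain e where e: "e > 0" "\<And>T. \<exists>t\<ge>T. \<bar>g t\<bar> \<ge> e" using not_tendsto0_E by blast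
  define \<tau> where "\<tau> = e / (2*M)"
  define \<Delta> where "\<Delta> = k * (e/2)^2 * \<tau>"
  have \<tau>: "\<tau> > 0" using e M by (simp add: \<tau>_def)
  have \<Delta>: "\<Delta> > 0" using e k \<tau> by (simp add: \<Delta>_def)
  have mono: "F b \<le> F a" if "0 \<le> a" "a \<le> b" for a b
  proof -
    have "F b \<le> F a - 0 * (b - a)"
      by (rule deriv_le_decrease[OF that d]) (use le k that in \<open>auto intro: order.trans[OF le] simp: mult_nonneg_nonneg\<close>)
    then show ?thesis by simp
  qed
  have step: "F (t + \<tau>) \<le> F t - \<Delta>" if t: "t \<ge> 0" "\<bar>g t\<bar> \<ge> e" for t
  proof -
    have "F (t + \<tau>) \<le> F t - (k * (e/2)^2) * ((t + \<tau>) - t)"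
    proof (rule deriv_le_decrease[OF t(1) _ d])
      show "t \<le> t + \<tau>" using \<tau> by simp
      fix s assume s: "t \<le> s" "s \<le> t + \<tau>"
      have "\<bar>g s - g t\<bar> \<le> M * \<bar>s - t\<bar>" using lip[of s t] s t by auto
      also have "\<dots> \<le> M * \<tau>" using s M by (intro mult_left_mono) auto
      also have "\<dots> = e/2" using M by (simp add: \<tau>_def)
      finally have "\<bar>g s\<bar> \<ge> e/2" using t(2) by linarith
      then have "(e/2)^2 \<le> (g s)^2" using e
        by (metis abs_le_square_iff abs_of_pos half_gt_zero_iff order_less_imp_le abs_ge_self order.trans)
      then have "k * (e/2)^2 \<le> k * (g s)^2" using k by simp
      then show "F' s \<le> - (k * (e/2)^2)" using le[of s] s t by linarith
    qed
    then show ?thesis by (simp add: \<Delta>_def)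
  qed
  have "\<exists>t\<ge>0. F t \<le> F 0 - real n * \<Delta>" for n
  proof (induction n)
    case 0 then show ?case by auto
  next
    case (Suc n)
    then obtain t0 where t0: "t0 \<ge> 0" "F t0 \<le> F 0 - real n * \<Delta>" by blast
    obtain t where t: "t \<ge> t0" "\<bar>g t\<bar> \<ge> e" using e(2) by blast
    have "F (t + \<tau>) \<le> F t - \<Delta>" using step[of t] t t0 by auto
    also have "F t \<le> F t0" using mono[of t0 t] t t0 by auto
    finally show ?case using t0 t \<tau> by (intro exI[of _ "t + \<tau>"]) (auto simp: algebra_simps)
  qed
  moreover obtain n where "real n > F 0 / \<Delta>" using reals_Archimedean2 by blast
  ultimately obtain t where "t \<ge> 0" "F t \<le> F 0 - real n * \<Delta>" by blast
  moreover have "real n * \<Delta> > F 0" using \<open>real n > F 0 / \<Delta>\<close> \<Delta> by (simp add: field_simps)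
  ultimately show False using nn[of t] by linarith
qed

lemma w_lemma:
  fixes u p W :: "real \<Rightarrow> real"
  assumes d: "\<And>t. t \<ge> 0 \<Longrightarrow> (u has_real_derivative (u t * (p t - a * W t))) (at t within {0..})"
    and u: "(u \<longlongrightarrow> us) at_top" and us: "us > 0" and p: "(p \<longlongrightarrow> 0) at_top" and a: "a > 0"
    and lip: "\<And>s t. s \<ge> 0 \<Longrightarrow> t \<ge> 0 \<Longrightarrow> \<bar>W s - W t\<bar> \<le> M * \<bar>s - t\<bar>" and M: "M > 0"
  shows "(W \<longlongrightarrow> 0) at_top"
proof (rule ccontr)
  assume "\<not> (W \<longlongrightarrow> 0) at_top"
  then obtain e where e: "e > 0" "\<And>T. \<exists>t\<ge>T. \<bar>W t\<bar> \<ge> e" using not_tendsto0_E by blast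
  define \<tau> where "\<tau> = e / (2*M)"
  define \<Delta> where "\<Delta> = (us/2) * (a*e/4)"
  have \<tau>: "\<tau> > 0" using e M by (simp add: \<tau>_def)
  have \<Delta>: "\<Delta> > 0" using e a us by (simp add: \<Delta>_def)
  have ev1: "eventually (\<lambda>t. dist (u t) us < \<Delta> * \<tau> / 2) at_top"
    using u \<Delta> \<tau> unfolding tendsto_iff by (meson half_gt_zero mult_pos_pos)
  have ev2: "eventually (\<lambda>t. dist (u t) us < us/2) at_top"
    using u us unfolding tendsto_iff by (meson half_gt_zero)
  have ev3: "eventually (\<lambda>t. dist (p t) 0 < a*e/4) at_top"
    using p a e unfolding tendsto_iff by (meson divide_pos_pos mult_pos_pos zero_less_numeral)
  obtain T where T: "\<And>t. t \<ge> T \<Longrightarrow> dist (u t) us < \<Delta> * \<tau> / 2 \<and> dist (u t) us < us/2 \<and> dist (p t) 0 < a*e/4"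
    using eventually_conj[OF ev1 eventually_conj[OF ev2 ev3]] unfolding eventually_at_top_linorder by blast
  obtain t where t: "t \<ge> max T 0" "\<bar>W t\<bar> \<ge> e" using e(2) by blast
  have Ws: "\<bar>W s - W t\<bar> \<le> e/2" if "t \<le> s" "s \<le> t + \<tau>" for s
  proof -
    have "\<bar>W s - W t\<bar> \<le> M * \<bar>s - t\<bar>" using lip[of s t] that t by auto
    also have "\<dots> \<le> M * \<tau>" using that M by (intro mult_left_mono) auto
    also have "\<dots> = e/2" using M by (simp add: \<tau>_def)
    finally show ?thesis .
  qed
  have props: "u s > us/2 \<and> \<bar>p s\<bar> < a*e/4" if "t \<le> s" for s
  proof -
    have "t \<ge> T" using t by simp
    then have "dist (u s) us < us/2 \<and> dist (p s) 0 < a*e/4" using T[of s] that by auto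
    then show ?thesis unfolding dist_real_def abs_less_iff by auto
  qed
  have close: "\<bar>u (t+\<tau>) - u t\<bar> < \<Delta> * \<tau>"
  proof -
    have "dist (u t) us < \<Delta> * \<tau> / 2" "dist (u (t+\<tau>)) us < \<Delta> * \<tau> / 2"
      using T[of t] T[of "t+\<tau>"] t \<tau> by auto
    then show ?thesis unfolding dist_real_def abs_less_iff by auto
  qed
  show False
  proof (cases "W t \<ge> e")
    case True
    have "u (t + \<tau>) \<le> u t - \<Delta> * ((t+\<tau>) - t)"
    proof (rule deriv_le_decrease[OF _ _ d])
      show "0 \<le> t" "t \<le> t + \<tau>" using t \<tau> by auto
      fix s assume s: "t \<le> s" "s \<le> t + \<tau>"
      have "W s \<ge> e/2" using Ws[OF s] True by linarith
      then have "a * e / 2 \<le> a * W s" using a mult_left_mono[of "e/2" "W s" a] by auto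
      then have X: "p s - a * W s \<le> - (a*e/4)" using props[OF s(1)] a
        unfolding abs_less_iff by linarith
      have "u s * (p s - a * W s) \<le> (us/2) * (p s - a * W s)"
        using props[OF s(1)] X a e by (intro mult_right_mono_neg) auto
      also have "\<dots> \<le> (us/2) * (- (a*e/4))" using X us by (intro mult_left_mono) auto
      finally show "u s * (p s - a * W s) \<le> - \<Delta>" by (simp add: \<Delta>_def)
    qed
    then show False using close \<tau> \<Delta> by simp
  next
    case False
    then have Wt: "W t \<le> -e" using t by linarith
    have "(\<lambda>s. - u s) (t + \<tau>) \<le> (\<lambda>s. - u s) t - \<Delta> * ((t+\<tau>) - t)"
    proof (rule deriv_le_decrease[OF _ _ DERIV_minus[OF d]])
      show "0 \<le> t" "t \<le> t + \<tau>" using t \<tau> by auto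
    next
      fix s assume s: "t \<le> s" "s \<le> t + \<tau>"
      have "W s \<le> - e/2" using Ws[OF s] Wt by linarith
      then have "a * W s \<le> - (a * e / 2)" using a mult_left_mono[of "W s" "-e/2" a] by auto
      then have X: "p s - a * W s \<ge> a*e/4" using props[OF s(1)] a
        unfolding abs_less_iff by linarith
      have "(us/2) * (a*e/4) \<le> (us/2) * (p s - a * W s)" using X us by (intro mult_left_mono) auto
      also have "\<dots> \<le> u s * (p s - a * W s)"
        using props[OF s(1)] X a e by (intro mult_right_mono) auto
      finally show "- (u s * (p s - a * W s)) \<le> - \<Delta>" by (simp add: \<Delta>_def)
    qed simp
    then show False using close \<tau> \<Delta> by simp
  qed
qed



definition H :: "real \<Rightarrow> real \<Rightarrow> real" where "H c x = x - c - c * (ln x - ln c)"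

lemma H_nonneg: assumes "c > 0" "x > 0" shows "H c x \<ge> 0"
proof -
  have "ln (x/c) \<le> x/c - 1" using assms by (intro ln_le_minus_one) auto
  then have "c * ln (x/c) \<le> c * (x/c - 1)" using assms by (intro mult_left_mono) auto
  then show ?thesis using assms by (simp add: H_def ln_div algebra_simps)
qed

lemma H_upper: assumes "c > 0" "x > 0" shows "H c x \<le> (x - c)^2 / x"
proof -
  have "ln (c/x) \<le> c/x - 1" using assms by (intro ln_le_minus_one) auto
  then have "c * ln (c/x) \<le> c * (c/x - 1)" using assms by (intro mult_left_mono) auto
  then have "H c x \<le> x - c + c * (c/x - 1)" using assms by (simp add: H_def ln_div algebra_simps)
  also have "\<dots> = (x - c)^2 / x" using assms by (simp add: field_simps power2_eq_square)
  finally show ?thesis .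
qed

lemma H_sqrt: assumes "c > 0" "x > 0" shows "(sqrt x - sqrt c)^2 \<le> H c x"
proof -
  have "ln (sqrt (x/c)) \<le> sqrt (x/c) - 1" using assms by (intro ln_le_minus_one) auto
  moreover have "ln (sqrt (x/c)) = (ln x - ln c) / 2" using assms by (simp add: ln_sqrt ln_div)
  ultimately have "c * (ln x - ln c) \<le> c * (2 * sqrt (x/c) - 2)" using assms by (intro mult_left_mono) auto
  moreover have "c * sqrt (x/c) = sqrt x * sqrt c" using assms
    by (metis less_eq_real_def real_div_sqrt real_sqrt_divide real_sqrt_gt_0_iff real_sqrt_mult_self times_divide_eq_right mult.commute nonzero_mult_div_cancel_left)
  ultimately have "c * (ln x - ln c) \<le> 2 * sqrt x * sqrt c - 2 * c" by (simp add: algebra_simps)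
  moreover have "(sqrt x - sqrt c)^2 = x - 2 * sqrt x * sqrt c + c" using assms
    by (simp add: power2_eq_square algebra_simps)
  ultimately show ?thesis by (simp add: H_def)
qed

lemma H_close: assumes "c > 0" "x > 0" "H c x \<le> K" shows "\<bar>x - c\<bar> \<le> sqrt K * (sqrt K + 2 * sqrt c)"
proof -
  have K: "K \<ge> 0" using H_nonneg[OF assms(1,2)] assms(3) by linarith
  have "(sqrt x - sqrt c)^2 \<le> K" using H_sqrt[OF assms(1,2)] assms(3) by linarith
  then have d: "\<bar>sqrt x - sqrt c\<bar> \<le> sqrt K" using real_sqrt_le_mono real_sqrt_abs by metis
  have "x - c = (sqrt x - sqrt c) * (sqrt x + sqrt c)" using assms
    by (simp add: algebra_simps)
  then have "\<bar>x - c\<bar> = \<bar>sqrt x - sqrt c\<bar> * (sqrt x + sqrt c)"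
    using assms by (metis abs_mult abs_of_nonneg add_nonneg_nonneg real_sqrt_ge_zero less_imp_le)
  also have "\<dots> \<le> sqrt K * (sqrt K + 2 * sqrt c)"
  proof (rule mult_mono[OF d])
    show "sqrt x + sqrt c \<le> sqrt K + 2 * sqrt c" using d by linarith
    show "0 \<le> sqrt K" "0 \<le> sqrt x + sqrt c" using K assms by auto
  qed
  finally show ?thesis .
qed

lemma H_deriv:
  assumes "(f has_real_derivative f') (at t within S)" "f t > 0" "c > 0"
  shows "((\<lambda>t. H c (f t)) has_real_derivative (f' * (1 - c / f t))) (at t within S)"
  unfolding H_def using assms
  by (auto intro!: derivative_eq_intros simp: field_simps)



locale sys =
  fixes r1 r2 mu a12 a13 a21 a31 us vs ws :: real
  assumes pos: "r1 > 0" "r2 > 0" "mu > 0" "a12 > 0" "a13 > 0" "a21 > 0" "a31 > 0"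
    and cond: "r1 * r2 * a31 - r1 * r2 * mu - a12 * a31 * r2 - a12 * a21 * mu > 0"
    and us_def: "us = mu / a31"
    and vs_def: "vs = 1 + a21 * mu / (a31 * r2)"
    and ws_def: "ws = (r1 * r2 * a31 - r1 * r2 * mu - a12 * a31 * r2 - a12 * a21 * mu) / (a13 * a31 * r2)"
begin

lemma eq_pos: "us > 0" "vs > 0" "ws > 0"
proof -
  have "a21*mu/(a31*r2) > 0" using pos by simp
  then show "vs > 0" by (simp add: vs_def)
  show "us > 0" "ws > 0" using pos cond by (auto simp: us_def ws_def)
qed

lemma eq1: "r1 * (1 - us) - a12 * vs - a13 * ws = 0"
  using pos by (simp add: us_def vs_def ws_def field_simps)

lemma eq2: "r2 * (1 - vs) + a21 * us = 0"
  using pos by (simp add: us_def vs_def field_simps)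

lemma eq3: "- mu + a31 * us = 0"
  using pos by (simp add: us_def field_simps)

lemma c_pos: "a12 / a21 > 0" "a13 / a31 > 0" using pos by auto

end

locale solution = sys +
  fixes u v w :: "real \<Rightarrow> real"
  assumes sol: "is_solution r1 r2 mu a12 a13 a21 a31 u v w"
    and init: "u 0 > 0" "v 0 > 0" "w 0 > 0"
begin

definition "du t = r1 * u t * (1 - u t) - a12 * u t * v t - a13 * u t * w t"
definition "dv t = r2 * v t * (1 - v t) + a21 * u t * v t"
definition "dw t = - mu * w t + a31 * u t * w t"

lemma derivs:
  assumes "t \<ge> 0"
  shows "(u has_real_derivative du t) (at t within {0..})"
    "(v has_real_derivative dv t) (at t within {0..})"
    "(w has_real_derivative dw t) (at t within {0..})"
  using sol assms unfolding is_solution_def du_def dv_def dw_def by auto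

lemma conts: "continuous_on {0..} u" "continuous_on {0..} v" "continuous_on {0..} w"
  using cont_of_deriv derivs by metis+

lemma u_pos: assumes "t \<ge> 0" shows "u t > 0"
proof (rule positivity[where g = "\<lambda>t. r1 * (1 - u t) - a12 * v t - a13 * w t", OF _ _ _ assms])
  fix s :: real assume "s \<ge> 0"
  then show "(u has_real_derivative (u s * (r1 * (1 - u s) - a12 * v s - a13 * w s))) (at s within {0..})"
    using derivs(1)[of s] by (simp add: du_def algebra_simps)
next
  show "continuous_on {0..} (\<lambda>t. r1 * (1 - u t) - a12 * v t - a13 * w t)"
    using conts by (intro continuous_intros) auto
qed (use init in auto)

lemma v_pos: assumes "t \<ge> 0" shows "v t > 0"
proof (rule positivity[where g = "\<lambda>t. r2 * (1 - v t) + a21 * u t", OF _ _ _ assms])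
  fix s :: real assume "s \<ge> 0"
  then show "(v has_real_derivative (v s * (r2 * (1 - v s) + a21 * u s))) (at s within {0..})"
    using derivs(2)[of s] by (simp add: dv_def algebra_simps)
next
  show "continuous_on {0..} (\<lambda>t. r2 * (1 - v t) + a21 * u t)"
    using conts by (intro continuous_intros) auto
qed (use init in auto)

lemma w_pos: assumes "t \<ge> 0" shows "w t > 0"
proof (rule positivity[where g = "\<lambda>t. - mu + a31 * u t", OF _ _ _ assms])
  fix s :: real assume "s \<ge> 0"
  then show "(w has_real_derivative (w s * (- mu + a31 * u s))) (at s within {0..})"
    using derivs(3)[of s] by (simp add: dw_def algebra_simps)
next
  show "continuous_on {0..} (\<lambda>t. - mu + a31 * u t)"
    using conts by (intro continuous_intros) auto
qed (use init in auto)

definition "V t = H us (u t) + (a12/a21) * H vs (v t) + (a13/a31) * H ws (w t)"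
definition "dV t = - r1 * (u t - us)^2 - (a12/a21) * r2 * (v t - vs)^2"

lemma dV_eq:
  assumes "t \<ge> 0"
  shows "du t * (1 - us / u t) + (a12/a21) * (dv t * (1 - vs / v t)) + (a13/a31) * (dw t * (1 - ws / w t)) = dV t"
proof -
  have p: "u t > 0" "v t > 0" "w t > 0" using u_pos v_pos w_pos assms by auto
  have h1: "du t * (1 - us / u t) = (u t - us) * (r1 * (1 - u t) - a12 * v t - a13 * w t)"
    using p by (simp add: du_def field_simps)
  have h1b: "r1 * (1 - u t) - a12 * v t - a13 * w t = - r1 * (u t - us) - a12 * (v t - vs) - a13 * (w t - ws)"
    using eq1 by (simp add: algebra_simps)
  have h2: "dv t * (1 - vs / v t) = (v t - vs) * (r2 * (1 - v t) + a21 * u t)"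
    using p by (simp add: dv_def field_simps)
  have h2b: "r2 * (1 - v t) + a21 * u t = - r2 * (v t - vs) + a21 * (u t - us)"
    using eq2 by (simp add: algebra_simps)
  have h3: "dw t * (1 - ws / w t) = (w t - ws) * (- mu + a31 * u t)"
    using p by (simp add: dw_def field_simps)
  have h3b: "- mu + a31 * u t = a31 * (u t - us)"
    using eq3 by (simp add: algebra_simps)
  show ?thesis unfolding h1 h1b h2 h2b h3 h3b dV_def using pos
    by (simp add: field_simps power2_eq_square)
qed

lemma V_deriv:
  assumes "t \<ge> 0"
  shows "(V has_real_derivative dV t) (at t within {0..})"
proof -
  have p: "u t > 0" "v t > 0" "w t > 0" using u_pos v_pos w_pos assms by auto
  have "(V has_real_derivative (du t * (1 - us / u t) + (a12/a21) * (dv t * (1 - vs / v t)) + (a13/a31) * (dw t * (1 - ws / w t)))) (at t within {0..})"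
    unfolding V_def
    by (intro DERIV_add DERIV_cmult H_deriv derivs assms p eq_pos)
  then show ?thesis using dV_eq[OF assms] by simp
qed

lemma dV_le: "dV t \<le> - r1 * (u t - us)^2" "dV t \<le> - ((a12/a21) * r2) * (v t - vs)^2"
  using pos unfolding dV_def by (auto simp: mult_nonneg_nonneg)

lemma H_terms_nonneg: assumes "t \<ge> 0"
  shows "H us (u t) \<ge> 0" "(a12/a21) * H vs (v t) \<ge> 0" "(a13/a31) * H ws (w t) \<ge> 0"
  using H_nonneg[OF eq_pos(1) u_pos[OF assms]]
    mult_nonneg_nonneg[OF less_imp_le[OF c_pos(1)] H_nonneg[OF eq_pos(2) v_pos[OF assms]]]
    mult_nonneg_nonneg[OF less_imp_le[OF c_pos(2)] H_nonneg[OF eq_pos(3) w_pos[OF assms]]] by auto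

lemma V_nonneg: "t \<ge> 0 \<Longrightarrow> V t \<ge> 0"
  unfolding V_def using H_terms_nonneg by (smt (verit))

lemma V_mono: assumes "0 \<le> s" "s \<le> t" shows "V t \<le> V s"
proof -
  have "V t \<le> V s - 0 * (t - s)"
  proof (rule deriv_le_decrease[OF assms V_deriv])
    fix x assume "s \<le> x" "x \<le> t"
    have "r1 * (u x - us)^2 \<ge> 0" using pos by simp
    then show "dV x \<le> - 0" using dV_le(1)[of x] by linarith
  qed
  then show ?thesis by simp
qed

end



lemma abs3: "\<bar>(a::real) * P - b * Q - c * R\<bar> \<le> \<bar>a\<bar> * \<bar>P\<bar> + \<bar>b\<bar> * \<bar>Q\<bar> + \<bar>c\<bar> * \<bar>R\<bar>"
  unfolding abs_mult[symmetric] by (smt (verit) abs_triangle_ineq abs_triangle_ineq4 abs_minus_cancel)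

lemma abs_prod_bound: "0 < (x::real) \<Longrightarrow> x \<le> X \<Longrightarrow> 0 < y \<Longrightarrow> y \<le> Y \<Longrightarrow> \<bar>x * y\<bar> \<le> X * Y"
  by (simp add: abs_mult mult_mono)

lemma abs_logistic_bound: "0 < (x::real) \<Longrightarrow> x \<le> X \<Longrightarrow> \<bar>x * (1 - x)\<bar> \<le> X * (1 + X)"
  unfolding abs_mult by (intro mult_mono) auto

context solution
begin

definition "K0 = V 0"
definition "Ub = us + sqrt K0 * (sqrt K0 + 2 * sqrt us)"
definition "Vb = vs + sqrt (K0 / (a12/a21)) * (sqrt (K0 / (a12/a21)) + 2 * sqrt vs)"
definition "Wb = ws + sqrt (K0 / (a13/a31)) * (sqrt (K0 / (a13/a31)) + 2 * sqrt ws)"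

lemma V_le0: "t \<ge> 0 \<Longrightarrow> V t \<le> K0"
  using V_mono[of 0 t] by (simp add: K0_def)

lemma H_bounds: assumes "t \<ge> 0"
  shows "H us (u t) \<le> K0" "H vs (v t) \<le> K0 / (a12/a21)" "H ws (w t) \<le> K0 / (a13/a31)"
proof -
  have "V t \<le> K0" by (rule V_le0[OF assms])
  note h = H_terms_nonneg[OF assms] this
  show "H us (u t) \<le> K0" using h unfolding V_def by linarith
  have "(a12/a21) * H vs (v t) \<le> K0" using h unfolding V_def by linarith
  then show "H vs (v t) \<le> K0 / (a12/a21)" using c_pos(1) by (metis pos_le_divide_eq mult.commute)
  have "(a13/a31) * H ws (w t) \<le> K0" using h unfolding V_def by linarith
  then show "H ws (w t) \<le> K0 / (a13/a31)" using c_pos(2) by (metis pos_le_divide_eq mult.commute)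
qed

lemma upper: assumes "t \<ge> 0" shows "u t \<le> Ub" "v t \<le> Vb" "w t \<le> Wb"
  using H_close[OF eq_pos(1) u_pos[OF assms] H_bounds(1)[OF assms]]
    H_close[OF eq_pos(2) v_pos[OF assms] H_bounds(2)[OF assms]]
    H_close[OF eq_pos(3) w_pos[OF assms] H_bounds(3)[OF assms]]
  unfolding Ub_def Vb_def Wb_def by auto

definition "Mu = r1 * (Ub * (1 + Ub)) + a12 * (Ub * Vb) + a13 * (Ub * Wb)"
definition "Mv = r2 * (Vb * (1 + Vb)) + a21 * (Ub * Vb)"
definition "Mw = mu * Wb + a31 * (Ub * Wb)"

lemma dbounds: assumes "t \<ge> 0" shows "\<bar>du t\<bar> \<le> Mu" "\<bar>dv t\<bar> \<le> Mv" "\<bar>dw t\<bar> \<le> Mw"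
proof -
  have p: "u t > 0" "v t > 0" "w t > 0" using u_pos v_pos w_pos assms by auto
  note b = upper[OF assms]
  have l1: "\<bar>u t * (1 - u t)\<bar> \<le> Ub * (1 + Ub)" using abs_logistic_bound p b by blast
  have l2: "\<bar>v t * (1 - v t)\<bar> \<le> Vb * (1 + Vb)" using abs_logistic_bound p b by blast
  have m1: "\<bar>u t * v t\<bar> \<le> Ub * Vb" using abs_prod_bound p b by blast
  have m2: "\<bar>u t * w t\<bar> \<le> Ub * Wb" using abs_prod_bound p b by blast
  have "\<bar>du t\<bar> = \<bar>r1 * (u t * (1 - u t)) - a12 * (u t * v t) - a13 * (u t * w t)\<bar>"
    by (simp add: du_def algebra_simps)
  also have "\<dots> \<le> \<bar>r1\<bar> * \<bar>u t * (1 - u t)\<bar> + \<bar>a12\<bar> * \<bar>u t * v t\<bar> + \<bar>a13\<bar> * \<bar>u t * w t\<bar>"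
    by (rule abs3)
  also have "\<dots> \<le> Mu" unfolding Mu_def using pos l1 m1 m2
    by (intro add_mono mult_left_mono) auto
  finally show "\<bar>du t\<bar> \<le> Mu" .
  have "\<bar>dv t\<bar> = \<bar>r2 * (v t * (1 - v t)) - (- a21) * (u t * v t) - 0 * (u t * w t)\<bar>"
    by (simp add: dv_def algebra_simps)
  also have "\<dots> \<le> \<bar>r2\<bar> * \<bar>v t * (1 - v t)\<bar> + \<bar>- a21\<bar> * \<bar>u t * v t\<bar> + \<bar>0\<bar> * \<bar>u t * w t\<bar>"
    by (rule abs3)
  also have "\<dots> \<le> Mv" unfolding Mv_def using pos l2 m1
    by (auto intro!: add_mono mult_left_mono)
  finally show "\<bar>dv t\<bar> \<le> Mv" .
  have "\<bar>dw t\<bar> = \<bar>(- mu) * (w t) - (- a31) * (u t * w t) - 0 * (u t * w t)\<bar>"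
    by (simp add: dw_def algebra_simps)
  also have "\<dots> \<le> \<bar>- mu\<bar> * \<bar>w t\<bar> + \<bar>- a31\<bar> * \<bar>u t * w t\<bar> + \<bar>0\<bar> * \<bar>u t * w t\<bar>"
    by (rule abs3)
  also have "\<dots> \<le> Mw" unfolding Mw_def using pos m2 p b
    by (auto intro!: add_mono mult_left_mono)
  finally show "\<bar>dw t\<bar> \<le> Mw" .
qed

lemma lips: assumes "s \<ge> 0" "t \<ge> 0"
  shows "\<bar>(u s - us) - (u t - us)\<bar> \<le> (\<bar>Mu\<bar> + 1) * \<bar>s - t\<bar>"
    "\<bar>(v s - vs) - (v t - vs)\<bar> \<le> (\<bar>Mv\<bar> + 1) * \<bar>s - t\<bar>"
    "\<bar>(w s - ws) - (w t - ws)\<bar> \<le> (\<bar>Mw\<bar> + 1) * \<bar>s - t\<bar>"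
proof -
  have "\<bar>u s - u t\<bar> \<le> (\<bar>Mu\<bar> + 1) * \<bar>s - t\<bar>"
    by (rule lipschitz_of_deriv[OF derivs(1) _ assms]) (use dbounds(1) in force)+
  then show "\<bar>(u s - us) - (u t - us)\<bar> \<le> (\<bar>Mu\<bar> + 1) * \<bar>s - t\<bar>" by simp
  have "\<bar>v s - v t\<bar> \<le> (\<bar>Mv\<bar> + 1) * \<bar>s - t\<bar>"
    by (rule lipschitz_of_deriv[OF derivs(2) _ assms]) (use dbounds(2) in force)+
  then show "\<bar>(v s - vs) - (v t - vs)\<bar> \<le> (\<bar>Mv\<bar> + 1) * \<bar>s - t\<bar>" by simp
  have "\<bar>w s - w t\<bar> \<le> (\<bar>Mw\<bar> + 1) * \<bar>s - t\<bar>"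
    by (rule lipschitz_of_deriv[OF derivs(3) _ assms]) (use dbounds(3) in force)+
  then show "\<bar>(w s - ws) - (w t - ws)\<bar> \<le> (\<bar>Mw\<bar> + 1) * \<bar>s - t\<bar>" by simp
qed

lemma u_conv: "(u \<longlongrightarrow> us) at_top"
proof -
  have "((\<lambda>t. u t - us) \<longlongrightarrow> 0) at_top"
    by (rule decay_lemma[OF V_deriv dV_le(1) _ V_nonneg lips(1)]) (use pos in auto)
  then show ?thesis by (simp add: LIM_zero_iff)
qed

lemma v_conv: "(v \<longlongrightarrow> vs) at_top"
proof -
  have "((\<lambda>t. v t - vs) \<longlongrightarrow> 0) at_top"
    by (rule decay_lemma[OF V_deriv dV_le(2) _ V_nonneg lips(2)]) (use pos in auto)
  then show ?thesis by (simp add: LIM_zero_iff)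
qed

lemma w_conv: "(w \<longlongrightarrow> ws) at_top"
proof -
  have "((\<lambda>t. w t - ws) \<longlongrightarrow> 0) at_top"
  proof (rule w_lemma[OF _ u_conv eq_pos(1) _ pos(5) lips(3)])
    fix t :: real assume t: "t \<ge> 0"
    have "du t = u t * ((- r1 * (u t - us) - a12 * (v t - vs)) - a13 * (w t - ws))"
      using eq1 by (simp add: du_def algebra_simps)
    then show "(u has_real_derivative u t * ((- r1 * (u t - us) - a12 * (v t - vs)) - a13 * (w t - ws))) (at t within {0..})"
      using derivs(1)[OF t] by simp
  next
    have "((\<lambda>t. - r1 * (u t - us) - a12 * (v t - vs)) \<longlongrightarrow> - r1 * (us - us) - a12 * (vs - vs)) at_top"
      by (intro tendsto_intros u_conv v_conv)
    then show "((\<lambda>t. - r1 * (u t - us) - a12 * (v t - vs)) \<longlongrightarrow> 0) at_top" by simp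
  qed auto
  then show ?thesis by (simp add: LIM_zero_iff)
qed

end



lemma dist3_ge: "\<bar>x1 - x2\<bar> \<le> dist3 x1 y1 z1 x2 y2 z2" "\<bar>y1 - y2\<bar> \<le> dist3 x1 y1 z1 x2 y2 z2"
  "\<bar>z1 - z2\<bar> \<le> dist3 x1 y1 z1 x2 y2 z2"
  unfolding dist3_def
  by (metis real_sqrt_abs real_sqrt_le_mono add_increasing2 add_increasing zero_le_power2 order_refl)+

lemma aux_le: "(A::real) = B + 2 * X \<Longrightarrow> 0 \<le> X \<Longrightarrow> B \<le> A" by linarith

lemma dist3_le: "dist3 x1 y1 z1 x2 y2 z2 \<le> \<bar>x1 - x2\<bar> + \<bar>y1 - y2\<bar> + \<bar>z1 - z2\<bar>"
proof -
  have "(x1 - x2)^2 + (y1 - y2)^2 + (z1 - z2)^2 \<le> (\<bar>x1 - x2\<bar> + \<bar>y1 - y2\<bar> + \<bar>z1 - z2\<bar>)^2"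
  proof -
    have "(\<bar>x1 - x2\<bar> + \<bar>y1 - y2\<bar> + \<bar>z1 - z2\<bar>)^2 = (x1 - x2)^2 + (y1 - y2)^2 + (z1 - z2)^2
      + 2 * (\<bar>x1 - x2\<bar> * \<bar>y1 - y2\<bar> + \<bar>x1 - x2\<bar> * \<bar>z1 - z2\<bar> + \<bar>y1 - y2\<bar> * \<bar>z1 - z2\<bar>)"
      by (simp add: power2_eq_square algebra_simps)
    moreover have "\<bar>x1 - x2\<bar> * \<bar>y1 - y2\<bar> + \<bar>x1 - x2\<bar> * \<bar>z1 - z2\<bar> + \<bar>y1 - y2\<bar> * \<bar>z1 - z2\<bar> \<ge> 0"
      by simp
    ultimately show ?thesis using aux_le by blast
  qed
  then show ?thesis unfolding dist3_def by (intro real_le_lsqrt) auto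
qed

lemma H_small: assumes "c > 0" "\<bar>x - c\<bar> < d" "d \<le> c/2" shows "H c x \<le> 2 * d^2 / c"
proof -
  have x: "x > c/2" "x > 0" using assms by auto
  have "H c x \<le> (x - c)^2 / x" by (rule H_upper) (use assms x in auto)
  also have "\<dots> \<le> (x - c)^2 / (c/2)" using x assms by (intro divide_left_mono) auto
  also have "\<dots> \<le> d^2 / (c/2)"
  proof (rule divide_right_mono)
    show "(x - c)^2 \<le> d^2" using assms by (metis abs_ge_zero less_imp_le power2_abs power_mono)
  qed (use assms in auto)
  finally show ?thesis by (simp add: mult.commute)
qed

lemma H_close2: assumes "c > 0" "x > 0" "H c x \<le> e^2" "0 \<le> e" "e \<le> 1"
  shows "\<bar>x - c\<bar> \<le> e * (1 + 2 * sqrt c)"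
proof -
  have "\<bar>x - c\<bar> \<le> sqrt (e^2) * (sqrt (e^2) + 2 * sqrt c)" by (rule H_close) (use assms in auto)
  also have "\<dots> = e * (e + 2 * sqrt c)" using assms by simp
  also have "\<dots> \<le> e * (1 + 2 * sqrt c)" using assms by (intro mult_left_mono) auto
  finally show ?thesis .
qed



context sys
begin

lemma stability:
  assumes eps: "\<epsilon> > 0"
  shows "\<exists>\<delta>>0. \<forall>u v w.
        is_solution r1 r2 mu a12 a13 a21 a31 u v w \<and> u 0 > 0 \<and> v 0 > 0 \<and> w 0 > 0 \<and>
        dist3 (u 0) (v 0) (w 0) us vs ws < \<delta> \<longrightarrow>
        (\<forall>t\<ge>0. dist3 (u t) (v t) (w t) us vs ws < \<epsilon>)"
proof -
  define c2 where "c2 = a12/a21"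
  define c3 where "c3 = a13/a31"
  have c: "c2 > 0" "c3 > 0" using c_pos by (auto simp: c2_def c3_def)
  define cm where "cm = min 1 (min c2 c3)"
  have cm: "cm > 0" "cm \<le> 1" "cm \<le> c2" "cm \<le> c3" using c by (auto simp: cm_def)
  define S where "S = sqrt us + sqrt vs + sqrt ws"
  have S: "S \<ge> 0" "sqrt us \<le> S" "sqrt vs \<le> S" "sqrt ws \<le> S" using eq_pos by (auto simp: S_def)
  define e where "e = min 1 (\<epsilon> / (6 * (1 + 2 * S)))"
  have e: "e > 0" "e \<le> 1" "e * (1 + 2 * S) \<le> \<epsilon> / 6"
  proof -
    show "e > 0" "e \<le> 1" using eps S by (auto simp: e_def)
    have "e \<le> \<epsilon> / (6 * (1 + 2 * S))" by (simp add: e_def)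
    then have "e * (1 + 2 * S) \<le> \<epsilon> / (6 * (1 + 2 * S)) * (1 + 2 * S)"
      using S by (intro mult_right_mono) auto
    also have "\<dots> = \<epsilon> / 6" using S by (simp add: field_simps)
    finally show "e * (1 + 2 * S) \<le> \<epsilon> / 6" .
  qed
  define K where "K = cm * e^2"
  have K: "K > 0" using cm e by (simp add: K_def)
  define A where "A = 2 / us + c2 * (2 / vs) + c3 * (2 / ws)"
  have A: "A > 0" using eq_pos c by (simp add: A_def add_pos_pos)
  define \<delta> where "\<delta> = min (min (us/2) (vs/2)) (min (ws/2) (sqrt (K/A)))"
  have \<delta>: "\<delta> > 0" "\<delta> \<le> us/2" "\<delta> \<le> vs/2" "\<delta> \<le> ws/2" "\<delta> \<le> sqrt (K/A)"
    using eq_pos K A by (auto simp: \<delta>_def)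
  have \<delta>2: "A * \<delta>^2 \<le> K"
  proof -
    have "\<delta>^2 \<le> (sqrt (K/A))^2" using \<delta> by (intro power_mono) auto
    also have "\<dots> = K / A" using K A by simp
    finally show ?thesis using A by (simp add: field_simps)
  qed
  show ?thesis
  proof (intro exI[of _ \<delta>] conjI allI impI \<delta>(1))
    fix u v w :: "real \<Rightarrow> real" and t :: real
    assume H0: "is_solution r1 r2 mu a12 a13 a21 a31 u v w \<and> u 0 > 0 \<and> v 0 > 0 \<and> w 0 > 0 \<and>
        dist3 (u 0) (v 0) (w 0) us vs ws < \<delta>"
    assume t: "t \<ge> 0"
    interpret S: solution r1 r2 mu a12 a13 a21 a31 us vs ws u v w
      using H0 by unfold_locales auto
    have d0: "\<bar>u 0 - us\<bar> < \<delta>" "\<bar>v 0 - vs\<bar> < \<delta>" "\<bar>w 0 - ws\<bar> < \<delta>"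
      using H0 dist3_ge(1)[of "u 0" us "v 0" "w 0" vs ws] dist3_ge(2)[of "v 0" vs "u 0" "w 0" us ws] dist3_ge(3)[of "w 0" ws "u 0" "v 0" us vs] by auto
    have "S.V 0 \<le> 2 * \<delta>^2 / us + c2 * (2 * \<delta>^2 / vs) + c3 * (2 * \<delta>^2 / ws)"
      unfolding S.V_def c2_def[symmetric] c3_def[symmetric]
      using H_small[OF eq_pos(1) d0(1) \<delta>(2)] H_small[OF eq_pos(2) d0(2) \<delta>(3)] H_small[OF eq_pos(3) d0(3) \<delta>(4)] c
      by (intro add_mono mult_left_mono) auto
    also have "\<dots> = A * \<delta>^2" by (simp add: A_def field_simps)
    finally have V0: "S.V 0 \<le> K" using \<delta>2 by linarith
    have Vt: "S.V t \<le> K" using S.V_mono[of 0 t] t V0 by simp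
    note h = S.H_terms_nonneg[OF t]
    have Hu: "H us (u t) \<le> e^2"
    proof -
      have "H us (u t) \<le> K" using h Vt unfolding S.V_def by linarith
      also have "K \<le> e^2" using cm e unfolding K_def by (simp add: mult_le_cancel_right1)
      finally show ?thesis .
    qed
    have Hv: "H vs (v t) \<le> e^2"
    proof -
      have "c2 * H vs (v t) \<le> K" using h Vt unfolding S.V_def c2_def by linarith
      also have "K \<le> c2 * e^2" unfolding K_def using cm e by (intro mult_right_mono) auto
      finally show ?thesis using c by simp
    qed
    have Hw: "H ws (w t) \<le> e^2"
    proof -
      have "c3 * H ws (w t) \<le> K" using h Vt unfolding S.V_def c3_def by linarith
      also have "K \<le> c3 * e^2" unfolding K_def using cm e by (intro mult_right_mono) auto
      finally show ?thesis using c by simp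
    qed
    have bu: "\<bar>u t - us\<bar> \<le> \<epsilon>/6"
    proof -
      have "\<bar>u t - us\<bar> \<le> e * (1 + 2 * sqrt us)" using H_close2[OF eq_pos(1) S.u_pos[OF t] Hu] e by auto
      also have "\<dots> \<le> e * (1 + 2 * S)" using e S by (intro mult_left_mono) auto
      finally show ?thesis using e by linarith
    qed
    have bv: "\<bar>v t - vs\<bar> \<le> \<epsilon>/6"
    proof -
      have "\<bar>v t - vs\<bar> \<le> e * (1 + 2 * sqrt vs)" using H_close2[OF eq_pos(2) S.v_pos[OF t] Hv] e by auto
      also have "\<dots> \<le> e * (1 + 2 * S)" using e S by (intro mult_left_mono) auto
      finally show ?thesis using e by linarith
    qed
    have bw: "\<bar>w t - ws\<bar> \<le> \<epsilon>/6"
    proof -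
      have "\<bar>w t - ws\<bar> \<le> e * (1 + 2 * sqrt ws)" using H_close2[OF eq_pos(3) S.w_pos[OF t] Hw] e by auto
      also have "\<dots> \<le> e * (1 + 2 * S)" using e S by (intro mult_left_mono) auto
      finally show ?thesis using e by linarith
    qed
    show "dist3 (u t) (v t) (w t) us vs ws < \<epsilon>"
      using dist3_le[of "u t" "v t" "w t" us vs ws] bu bv bw eps by linarith
  qed
qed

end


theorem theorem2:
  fixes r1 r2 mu a12 a13 a21 a31 :: real
  assumes pos: "r1 > 0" "r2 > 0" "mu > 0" "a12 > 0" "a13 > 0" "a21 > 0" "a31 > 0"
    and cond: "r1 * r2 * a31 - r1 * r2 * mu - a12 * a31 * r2 - a12 * a21 * mu > 0"
  defines "us \<equiv> mu / a31"
    and "vs \<equiv> 1 + a21 * mu / (a31 * r2)"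
    and "ws \<equiv> (r1 * r2 * a31 - r1 * r2 * mu - a12 * a31 * r2 - a12 * a21 * mu) / (a13 * a31 * r2)"
  shows
    \<comment> \<open>E_* is a positive equilibrium\<close>
    "us > 0 \<and> vs > 0 \<and> ws > 0 \<and>
     r1 * us * (1 - us) - a12 * us * vs - a13 * us * ws = 0 \<and>
     r2 * vs * (1 - vs) + a21 * us * vs = 0 \<and>
     - mu * ws + a31 * us * ws = 0 \<and>
     \<comment> \<open>Lyapunov stability (for solutions in the positive orthant)\<close>
     (\<forall>\<epsilon>>0. \<exists>\<delta>>0. \<forall>u v w.
        is_solution r1 r2 mu a12 a13 a21 a31 u v w \<and> u 0 > 0 \<and> v 0 > 0 \<and> w 0 > 0 \<and>
        dist3 (u 0) (v 0) (w 0) us vs ws < \<delta> \<longrightarrow>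
        (\<forall>t\<ge>0. dist3 (u t) (v t) (w t) us vs ws < \<epsilon>)) \<and>
     \<comment> \<open>global attractivity in the positive orthant\<close>
     (\<forall>u v w.
        is_solution r1 r2 mu a12 a13 a21 a31 u v w \<and> u 0 > 0 \<and> v 0 > 0 \<and> w 0 > 0 \<longrightarrow>
        (u \<longlongrightarrow> us) at_top \<and> (v \<longlongrightarrow> vs) at_top \<and> (w \<longlongrightarrow> ws) at_top)"
  proof -
  interpret sys r1 r2 mu a12 a13 a21 a31 us vs ws
    using pos cond by unfold_locales (simp_all add: us_def vs_def ws_def)
  have e1: "r1 * us * (1 - us) - a12 * us * vs - a13 * us * ws = 0"
  proof -
    have "r1 * us * (1 - us) - a12 * us * vs - a13 * us * ws = us * (r1 * (1 - us) - a12 * vs - a13 * ws)"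
      by (simp add: algebra_simps)
    then show ?thesis using eq1 by simp
  qed
  have e2: "r2 * vs * (1 - vs) + a21 * us * vs = 0"
  proof -
    have "r2 * vs * (1 - vs) + a21 * us * vs = vs * (r2 * (1 - vs) + a21 * us)"
      by (simp add: algebra_simps)
    then show ?thesis using eq2 by simp
  qed
  have e3: "- mu * ws + a31 * us * ws = 0"
  proof -
    have "- mu * ws + a31 * us * ws = ws * (- mu + a31 * us)"
      by (simp add: algebra_simps)
    then show ?thesis using eq3 by simp
  qed
  have st: "\<forall>\<epsilon>>0. \<exists>\<delta>>0. \<forall>u v w.
        is_solution r1 r2 mu a12 a13 a21 a31 u v w \<and> u 0 > 0 \<and> v 0 > 0 \<and> w 0 > 0 \<and>
        dist3 (u 0) (v 0) (w 0) us vs ws < \<delta> \<longrightarrow>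
        (\<forall>t\<ge>0. dist3 (u t) (v t) (w t) us vs ws < \<epsilon>)"
    using stability by blast
  have at: "\<forall>u v w.
        is_solution r1 r2 mu a12 a13 a21 a31 u v w \<and> u 0 > 0 \<and> v 0 > 0 \<and> w 0 > 0 \<longrightarrow>
        (u \<longlongrightarrow> us) at_top \<and> (v \<longlongrightarrow> vs) at_top \<and> (w \<longlongrightarrow> ws) at_top"
  proof (intro allI impI)
    fix u v w :: "real \<Rightarrow> real"
    assume "is_solution r1 r2 mu a12 a13 a21 a31 u v w \<and> u 0 > 0 \<and> v 0 > 0 \<and> w 0 > 0"
    then interpret S: solution r1 r2 mu a12 a13 a21 a31 us vs ws u v w
      by unfold_locales auto
    show "(u \<longlongrightarrow> us) at_top \<and> (v \<longlongrightarrow> vs) at_top \<and> (w \<longlongrightarrow> ws) at_top"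
      using S.u_conv S.v_conv S.w_conv by blast
  qed
  show ?thesis using eq_pos e1 e2 e3 st at by blast
qed

end
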